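(* Let $B$ be a $p\times q$ matrix, $G$ a $q\times q$ symmetric matrix and $G'$ a $p\times p$ symmetric matrix. Let $$A=\begin{bmatrix} G' & B & B\\ B^T & 0 & G\\ B^T & G & 0\end{bmatrix},\qquad C=\begin{bmatrix} G' & B & B\\ B^T & G & 0\\ B^T & 0 & G\end{bmatrix},$$ both of size $(p+2q)\times(p+2q)$. Then $A\oplus\begin{bmatrix} G & 0\\ 0 & G\end{bmatrix}$ and $C\oplus\begin{bmatrix}0 & G\\ G & 0\end{bmatrix}$ are cospectral.
   Context: For matrices $X,Y$, $X\oplus Y=\begin{bmatrix} X&0\\0&Y\end{bmatrix}$, and $0$ denotes a zero matrix of appropriate size. Two square matrices are cospectral if they have the same eigenvalues with the same multiplicities. *)

theory Defs
  imports "Jordan_Normal_Form.Char_Poly"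
begin

definition dsum :: "'a::zero mat \<Rightarrow> 'a mat \<Rightarrow> 'a mat" where
  "dsum X Y = four_block_mat X (0\<^sub>m (dim_row X) (dim_col Y)) (0\<^sub>m (dim_row Y) (dim_col X)) Y"

definition hcat :: "'a::zero mat \<Rightarrow> 'a mat \<Rightarrow> 'a mat" where
  "hcat X Y = four_block_mat X Y (0\<^sub>m 0 (dim_col X)) (0\<^sub>m 0 (dim_col Y))"

definition vcat :: "'a::zero mat \<Rightarrow> 'a mat \<Rightarrow> 'a mat" where
  "vcat X Y = four_block_mat X (0\<^sub>m (dim_row X) 0) Y (0\<^sub>m (dim_row Y) 0)"

definition cospectral :: "real mat \<Rightarrow> real mat \<Rightarrow> bool" where
  "cospectral X Y \<longleftrightarrow> square_mat X \<and> square_mat Y \<and> dim_row X = dim_row Y \<and>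
     (\<forall>z::complex. order z (char_poly (map_mat complex_of_real X)) =
                    order z (char_poly (map_mat complex_of_real Y)))"

end

theory Submission
  imports Defs
begin

lemma mult_fb:
  assumes "dim_row A1 = dim_row B1" "dim_row C1 = dim_row D1" "dim_col A1 = dim_col C1" "dim_col B1 = dim_col D1"
   "dim_row A2 = dim_row B2" "dim_row C2 = dim_row D2" "dim_col A2 = dim_col C2" "dim_col B2 = dim_col D2"
   "dim_col A1 = dim_row A2" "dim_col B1 = dim_row C2"
  shows "four_block_mat A1 B1 C1 D1 * four_block_mat A2 B2 C2 D2
  = four_block_mat (A1 * A2 + B1 * C2) (A1 * B2 + B1 * D2)
    (C1 * A2 + D1 * C2) (C1 * B2 + D1 * D2)"
  by (rule mult_four_block_mat[of A1 "dim_row A1" "dim_col A1" B1 "dim_col B1" C1 "dim_row C1" D1 A2 "dim_col A2" B2 "dim_col B2" C2 D2],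
      (rule carrier_matI; use assms in linarith)+)

lemma dim_hcat[simp]: "dim_row (hcat X Y) = dim_row X" "dim_col (hcat X Y) = dim_col X + dim_col Y"
  by (auto simp: hcat_def)
lemma dim_vcat[simp]: "dim_row (vcat X Y) = dim_row X + dim_row Y" "dim_col (vcat X Y) = dim_col X"
  by (auto simp: vcat_def)

lemma zero_rows_eq: "dim_row A = 0 \<Longrightarrow> A = 0\<^sub>m 0 (dim_col A)"
  by (rule eq_matI, auto)
lemma zero_cols_eq: "dim_col A = 0 \<Longrightarrow> A = 0\<^sub>m (dim_row A) 0"
  by (rule eq_matI, auto)

lemma one_mult[simp]: "dim_row A = n \<Longrightarrow> 1\<^sub>m n * A = (A :: 'a::semiring_1 mat)"
  by (metis carrier_mat_triv left_mult_one_mat)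
lemma mult_one[simp]: "dim_col A = n \<Longrightarrow> A * 1\<^sub>m n = (A :: 'a::semiring_1 mat)"
  by (metis carrier_mat_triv right_mult_one_mat)
lemma zero_mult[simp]: "dim_row A = n \<Longrightarrow> 0\<^sub>m m n * A = 0\<^sub>m m (dim_col A :: nat)"
  by (rule eq_matI, auto simp: scalar_prod_def)
lemma mult_zero[simp]: "dim_col A = n \<Longrightarrow> A * 0\<^sub>m n m = 0\<^sub>m (dim_row A) (m::nat)"
  by (rule eq_matI, auto simp: scalar_prod_def)
lemma add_zero[simp]: "dim_row A = n \<Longrightarrow> dim_col A = m \<Longrightarrow> A + 0\<^sub>m n m = (A :: 'a::monoid_add mat)"
  by (rule eq_matI, auto)
lemma zero_add[simp]: "dim_row A = n \<Longrightarrow> dim_col A = m \<Longrightarrow> 0\<^sub>m n m + A = (A :: 'a::monoid_add mat)"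
  by (rule eq_matI, auto)
lemma add_uminus[simp]: "dim_row A = n \<Longrightarrow> dim_col A = m \<Longrightarrow> A + - A = (0\<^sub>m n m :: 'a::ab_group_add mat)"
  by (rule eq_matI, auto)
lemma uminus_one_mult[simp]: "dim_row A = n \<Longrightarrow> (- 1\<^sub>m n) * A = - (A :: 'a::ring_1 mat)"
  by (rule eq_matI, auto simp: scalar_prod_def sum.neutral if_distrib cong: if_cong)
lemma mult_uminus_one[simp]: "dim_col A = n \<Longrightarrow> A * (- 1\<^sub>m n) = - (A :: 'a::ring_1 mat)"
  by (rule eq_matI, auto simp: scalar_prod_def if_distrib cong: if_cong)

lemma L1: assumes "dim_row a = dim_row b" "dim_row c = dim_row d" "dim_col a = dim_col c" "dim_col b = dim_col d"
  "dim_col a = dim_row U" "dim_col b = dim_row V" "dim_col U = dim_col V"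
  shows "four_block_mat a b c d * vcat U V = vcat (a * U + b * V) (c * U + d * V)"
  unfolding vcat_def using assms by (subst mult_fb, auto intro!: cong_four_block_mat eq_matI)

lemma L2: assumes "dim_row a = dim_row b" "dim_row c = dim_row d" "dim_col a = dim_col c" "dim_col b = dim_col d"
  "dim_row a = dim_col U" "dim_row c = dim_col V" "dim_row U = dim_row V"
  shows "hcat U V * four_block_mat a b c d = hcat (U * a + V * c) (U * b + V * d)"
  unfolding hcat_def using assms by (subst mult_fb, auto intro!: cong_four_block_mat eq_matI)

lemma fb_triv: "M = four_block_mat M (0\<^sub>m (dim_row M) 0) (0\<^sub>m 0 (dim_col M)) (0\<^sub>m 0 0)"
  by (intro eq_matI, auto)

lemma L3: assumes "dim_col U = dim_col V" "dim_col U = dim_row M"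
  shows "vcat U V * M = vcat (U * M) (V * M)"
proof -
  have "vcat U V * M = vcat U V * four_block_mat M (0\<^sub>m (dim_row M) 0) (0\<^sub>m 0 (dim_col M)) (0\<^sub>m 0 0)"
    by (subst fb_triv[of M], simp)
  also have "\<dots> = vcat (U * M) (V * M)"
    unfolding vcat_def using assms by (subst mult_fb, auto intro!: cong_four_block_mat eq_matI)
  finally show ?thesis .
qed

lemma L4: assumes "dim_row U = dim_row V" "dim_col M = dim_row U"
  shows "M * hcat U V = hcat (M * U) (M * V)"
proof -
  have "M * hcat U V = four_block_mat M (0\<^sub>m (dim_row M) 0) (0\<^sub>m 0 (dim_col M)) (0\<^sub>m 0 0) * hcat U V"
    by (subst fb_triv[of M], simp)
  also have "\<dots> = hcat (M * U) (M * V)"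
    unfolding hcat_def using assms by (subst mult_fb, auto intro!: cong_four_block_mat eq_matI)
  finally show ?thesis .
qed

lemma L5: assumes "dim_row U = dim_row V" "dim_col X = dim_col Y" "dim_col U = dim_row X" "dim_col V = dim_row Y"
  shows "hcat U V * vcat X Y = U * X + V * Y"
proof -
  have "hcat U V * vcat X Y = four_block_mat (U * X + V * Y) (0\<^sub>m (dim_row U) 0) (0\<^sub>m 0 (dim_col X)) (0\<^sub>m 0 0)"
    unfolding hcat_def vcat_def using assms by (subst mult_fb, auto intro!: cong_four_block_mat eq_matI)
  also have "\<dots> = U * X + V * Y" using assms by (subst (2) fb_triv[of "U * X + V * Y"], simp)
  finally show ?thesis .
qed

lemma L6: assumes "dim_col U = dim_col V" "dim_row X = dim_row Y" "dim_col U = dim_row X"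
  shows "vcat U V * hcat X Y = four_block_mat (U * X) (U * Y) (V * X) (V * Y)"
  unfolding hcat_def vcat_def using assms by (subst mult_fb, auto intro!: cong_four_block_mat eq_matI)

lemma hcat_add: "dim_row A = dim_row C \<Longrightarrow> dim_col A = dim_col C \<Longrightarrow> dim_row B = dim_row D \<Longrightarrow> dim_col B = dim_col D \<Longrightarrow> dim_row A = dim_row B \<Longrightarrow>
  hcat A B + hcat C D = hcat (A + C) (B + D)"
  unfolding hcat_def by (intro eq_matI, auto)
lemma vcat_add: "dim_row A = dim_row C \<Longrightarrow> dim_col A = dim_col C \<Longrightarrow> dim_row B = dim_row D \<Longrightarrow> dim_col B = dim_col D \<Longrightarrow> dim_col A = dim_col B \<Longrightarrow>
  vcat A B + vcat C D = vcat (A + C) (B + D)"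
  unfolding vcat_def by (intro eq_matI, auto)
lemma fb_add: "dim_row A = dim_row A' \<Longrightarrow> dim_col A = dim_col A' \<Longrightarrow> dim_row D = dim_row D' \<Longrightarrow> dim_col D = dim_col D' \<Longrightarrow>
  dim_row A = dim_row B \<Longrightarrow> dim_row A' = dim_row B' \<Longrightarrow> dim_col B = dim_col B' \<Longrightarrow> dim_col B = dim_col D \<Longrightarrow>
  dim_row C = dim_row C' \<Longrightarrow> dim_col C = dim_col C' \<Longrightarrow> dim_row C = dim_row D \<Longrightarrow> dim_col C = dim_col A \<Longrightarrow>
  four_block_mat A B C D + four_block_mat A' B' C' D' = four_block_mat (A + A') (B + B') (C + C') (D + D')"
  by (intro eq_matI, auto)
lemma hcat_zero: "hcat (0\<^sub>m a b) (0\<^sub>m a c) = 0\<^sub>m a (b + c)"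
  unfolding hcat_def by (intro eq_matI, auto)
lemma vcat_zero: "vcat (0\<^sub>m a c) (0\<^sub>m b c) = 0\<^sub>m (a + b) c"
  unfolding vcat_def by (intro eq_matI, auto)
lemma two_mult[simp]: "dim_row A = n \<Longrightarrow> (1\<^sub>m n + 1\<^sub>m n) * A = A + (A :: 'a::semiring_1 mat)"
  by (subst add_mult_distrib_mat[of _ n n], auto)
lemma mult_two[simp]: "dim_col A = n \<Longrightarrow> A * (1\<^sub>m n + 1\<^sub>m n) = A + (A :: 'a::semiring_1 mat)"
  by (subst mult_add_distrib_mat[of _ "dim_row A" n], auto)

lemma uminus_zero[simp]: "- 0\<^sub>m n m = (0\<^sub>m n m :: 'a::group_add mat)"
  by (rule eq_matI, auto)
lemma uminus_add[simp]: "dim_row A = n \<Longrightarrow> dim_col A = m \<Longrightarrow> - A + A = (0\<^sub>m n m :: 'a::group_add mat)"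
  by (rule eq_matI, auto)
lemmas dimS = index_mat_four_block(2,3) index_zero_mat(2,3) index_one_mat(2,3) index_add_mat(2,3)
  index_uminus_mat(2,3) index_transpose_mat(2,3) index_mult_mat(2,3) dim_hcat dim_vcat
lemmas arS = one_mult mult_one zero_mult mult_zero add_zero zero_add add_uminus uminus_one_mult mult_uminus_one two_mult mult_two
lemmas L3' = L3[where M="four_block_mat a b c d" for a b c d]
lemmas L4' = L4[where M="four_block_mat a b c d" for a b c d]
lemmas blk = mult_fb L1 L2 L3' L4' L5 L6 hcat_add vcat_add fb_add hcat_zero vcat_zero

lemma main_1:
  fixes B G G' :: "real mat"
  assumes "B \<in> carrier_mat p q" "G \<in> carrier_mat q q" "G' \<in> carrier_mat p p"
  shows "four_block_mat (1\<^sub>m p + 1\<^sub>m p) (0\<^sub>m p (q+q)) (0\<^sub>m (q+q) p) (four_block_mat (1\<^sub>m q) (1\<^sub>m q) (1\<^sub>m q) (1\<^sub>m q))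
   * four_block_mat G' (hcat B B) (vcat (transpose_mat B) (transpose_mat B)) (four_block_mat (0\<^sub>m q q) G G (0\<^sub>m q q))
   = four_block_mat G' (hcat B B) (vcat (transpose_mat B) (transpose_mat B)) (four_block_mat G (0\<^sub>m q q) (0\<^sub>m q q) G)
   * four_block_mat (1\<^sub>m p + 1\<^sub>m p) (0\<^sub>m p (q+q)) (0\<^sub>m (q+q) p) (four_block_mat (1\<^sub>m q) (1\<^sub>m q) (1\<^sub>m q) (1\<^sub>m q))"
proof -
  have d: "dim_row B = p" "dim_col B = q" "dim_row G = q" "dim_col G = q" "dim_row G' = p" "dim_col G' = p"
    using assms by auto
  show ?thesis
  apply (simp add: d blk)
  done
qed

lemma main_TX:
  fixes B G G' :: "real mat"
  assumes "B \<in> carrier_mat p q" "G \<in> carrier_mat q q" "G' \<in> carrier_mat p p"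
  defines "I \<equiv> 1\<^sub>m q :: real mat" and "Z \<equiv> 0\<^sub>m q q :: real mat"
  defines "T \<equiv> four_block_mat
     (four_block_mat (1\<^sub>m p + 1\<^sub>m p) (0\<^sub>m p (q+q)) (0\<^sub>m (q+q) p) (four_block_mat I I I I))
     (vcat (0\<^sub>m p (q+q)) (four_block_mat I Z (-I) Z))
     (hcat (0\<^sub>m (q+q) p) (four_block_mat I (-I) (-I) I))
     (four_block_mat Z I Z I)"
  shows "T * dsum (four_block_mat G' (hcat B B) (vcat (transpose_mat B) (transpose_mat B))
                           (four_block_mat (0\<^sub>m q q) G G (0\<^sub>m q q)))
           (four_block_mat G (0\<^sub>m q q) (0\<^sub>m q q) G)
    = dsum (four_block_mat G' (hcat B B) (vcat (transpose_mat B) (transpose_mat B))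
                           (four_block_mat G (0\<^sub>m q q) (0\<^sub>m q q) G))
           (four_block_mat (0\<^sub>m q q) G G (0\<^sub>m q q)) * T"
proof -
  have d: "dim_row B = p" "dim_col B = q" "dim_row G = q" "dim_col G = q" "dim_row G' = p" "dim_col G' = p"
    using assms by auto
  show ?thesis unfolding T_def I_def Z_def dsum_def
  apply (simp add: d blk)
  done
qed

lemma smult_one_split: "(c::'a::semiring_1) \<cdot>\<^sub>m 1\<^sub>m (a + b) = four_block_mat (c \<cdot>\<^sub>m 1\<^sub>m a) (0\<^sub>m a b) (0\<^sub>m b a) (c \<cdot>\<^sub>m 1\<^sub>m b)"
  by (rule eq_matI, auto)
lemma leaf1: "1\<^sub>m n + 1\<^sub>m n + (1\<^sub>m n + 1\<^sub>m n) = (4::real) \<cdot>\<^sub>m 1\<^sub>m n"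
  by (rule eq_matI, auto)
lemma leaf2: "1\<^sub>m n + 1\<^sub>m n + (- 1\<^sub>m n + - 1\<^sub>m n) = (0\<^sub>m n n :: real mat)"
  by (rule eq_matI, auto)
lemma leaf3: "1\<^sub>m n + 1\<^sub>m n + - (- 1\<^sub>m n + - 1\<^sub>m n) = (4::real) \<cdot>\<^sub>m 1\<^sub>m n"
  by (rule eq_matI, auto)
lemma leaf4: "- 1\<^sub>m n + - 1\<^sub>m n + (1\<^sub>m n + 1\<^sub>m n) = (0\<^sub>m n n :: real mat)"
  by (rule eq_matI, auto)

lemma main_TQ:
  fixes p q :: nat
  defines "I \<equiv> 1\<^sub>m q :: real mat" and "Z \<equiv> 0\<^sub>m q q :: real mat"
  defines "T \<equiv> four_block_mat
     (four_block_mat (1\<^sub>m p + 1\<^sub>m p) (0\<^sub>m p (q+q)) (0\<^sub>m (q+q) p) (four_block_mat I I I I))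
     (vcat (0\<^sub>m p (q+q)) (four_block_mat I Z (-I) Z))
     (hcat (0\<^sub>m (q+q) p) (four_block_mat I (-I) (-I) I))
     (four_block_mat Z I Z I)"
  defines "Q \<equiv> four_block_mat
     (four_block_mat (1\<^sub>m p + 1\<^sub>m p) (0\<^sub>m p (q+q)) (0\<^sub>m (q+q) p) (four_block_mat I I I I))
     (vcat (0\<^sub>m p (q+q)) (four_block_mat I (-I) (-I) I))
     (hcat (0\<^sub>m (q+q) p) (four_block_mat (I + I) (-(I + I)) Z Z))
     (four_block_mat Z Z (I + I) (I + I))"
  shows "T * Q = (4::real) \<cdot>\<^sub>m 1\<^sub>m (p + (q + q) + (q + q))"
  unfolding T_def Q_def I_def Z_def
  apply (simp add: blk)
  apply (simp add: smult_one_split leaf1 leaf2 leaf3 leaf4)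
  done

theorem theorem3p17:
  fixes p q :: nat and B G G' :: "real mat"
  assumes "B \<in> carrier_mat p q"
    and "G \<in> carrier_mat q q" and "transpose_mat G = G"
    and "G' \<in> carrier_mat p p" and "transpose_mat G' = G'"
  shows "cospectral
     (dsum (four_block_mat G' (hcat B B) (vcat (transpose_mat B) (transpose_mat B))
                           (four_block_mat (0\<^sub>m q q) G G (0\<^sub>m q q)))
           (four_block_mat G (0\<^sub>m q q) (0\<^sub>m q q) G))
     (dsum (four_block_mat G' (hcat B B) (vcat (transpose_mat B) (transpose_mat B))
                           (four_block_mat G (0\<^sub>m q q) (0\<^sub>m q q) G))
           (four_block_mat (0\<^sub>m q q) G G (0\<^sub>m q q)))"
    (is "cospectral ?X ?Y")
proof -
  define I where "I = (1\<^sub>m q :: real mat)"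
  define Z where "Z = (0\<^sub>m q q :: real mat)"
  define T where "T = four_block_mat
     (four_block_mat (1\<^sub>m p + 1\<^sub>m p) (0\<^sub>m p (q+q)) (0\<^sub>m (q+q) p) (four_block_mat I I I I))
     (vcat (0\<^sub>m p (q+q)) (four_block_mat I Z (-I) Z))
     (hcat (0\<^sub>m (q+q) p) (four_block_mat I (-I) (-I) I))
     (four_block_mat Z I Z I)"
  define Q where "Q = four_block_mat
     (four_block_mat (1\<^sub>m p + 1\<^sub>m p) (0\<^sub>m p (q+q)) (0\<^sub>m (q+q) p) (four_block_mat I I I I))
     (vcat (0\<^sub>m p (q+q)) (four_block_mat I (-I) (-I) I))
     (hcat (0\<^sub>m (q+q) p) (four_block_mat (I + I) (-(I + I)) Z Z))
     (four_block_mat Z Z (I + I) (I + I))"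
  let ?n = "p + (q + q) + (q + q)"
  have d: "dim_row B = p" "dim_col B = q" "dim_row G = q" "dim_col G = q" "dim_row G' = p" "dim_col G' = p"
    using assms by auto
  have TX: "T * ?X = ?Y * T"
    unfolding T_def I_def Z_def by (rule main_TX[OF assms(1,2,4)])
  have TQ: "T * Q = (4::real) \<cdot>\<^sub>m 1\<^sub>m ?n"
    unfolding T_def Q_def I_def Z_def by (rule main_TQ)
  have cX: "?X \<in> carrier_mat ?n ?n" by (simp only: carrier_mat_def dsum_def dimS d simp_thms mem_Collect_eq)
  have cY: "?Y \<in> carrier_mat ?n ?n" by (simp only: carrier_mat_def dsum_def dimS d simp_thms mem_Collect_eq)
  have cT: "T \<in> carrier_mat ?n ?n" by (simp only: carrier_mat_def T_def I_def Z_def dimS simp_thms mem_Collect_eq)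
  have cQ: "Q \<in> carrier_mat ?n ?n" by (simp only: carrier_mat_def Q_def I_def Z_def dimS simp_thms mem_Collect_eq)
  define Qi where "Qi = (1/4::real) \<cdot>\<^sub>m Q"
  have cQi: "Qi \<in> carrier_mat ?n ?n" using cQ by (simp add: Qi_def)
  have TQi: "T * Qi = 1\<^sub>m ?n"
  proof -
    have "T * Qi = (1/4::real) \<cdot>\<^sub>m (T * Q)" unfolding Qi_def using cT cQ by (simp add: mult_smult_distrib)
    also have "\<dots> = 1\<^sub>m ?n" unfolding TQ by (rule eq_matI, auto)
    finally show ?thesis .
  qed
  have QiT: "Qi * T = 1\<^sub>m ?n"
    by (rule mat_mult_left_right_inverse[OF cT cQi TQi])
  have "?Y = ?Y * (T * Qi)" using cY by (simp add: TQi)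
  also have "\<dots> = (?Y * T) * Qi" using cY cT cQi by (simp add: assoc_mult_mat)
  also have "\<dots> = T * ?X * Qi" by (simp add: TX)
  finally have YX: "?Y = T * ?X * Qi" .
  have "similar_mat_wit ?Y ?X T Qi"
    unfolding similar_mat_wit_def Let_def using cX cY cT cQi TQi QiT YX
    by (simp add: carrier_matD)
  hence "similar_mat ?Y ?X" unfolding similar_mat_def by blast
  hence cp: "char_poly ?Y = char_poly ?X" by (rule char_poly_similar)
  have "char_poly (map_mat complex_of_real ?X) = map_poly complex_of_real (char_poly ?X)"
    by (rule of_real_hom.char_poly_hom[OF cX])
  moreover have "char_poly (map_mat complex_of_real ?Y) = map_poly complex_of_real (char_poly ?Y)"
    by (rule of_real_hom.char_poly_hom[OF cY])
  ultimately have "char_poly (map_mat complex_of_real ?X) = char_poly (map_mat complex_of_real ?Y)"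
    using cp by simp
  thus ?thesis unfolding cospectral_def using cX cY by (simp add: carrier_matD)
qed
end
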